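(* Let $n$ be a positive integer and let $\lambda$ be a partition with at most $n$ nonzero parts. Then the number $|\mathrm{SVT}(\lambda,n)|$ of set-valued tableaux of shape $\lambda$ with entries in $[n]$ is odd.
   Context: A partition $\lambda$ is identified with its Young diagram $\{(i,j)\in\mathbb{Z}_{>0}^2 : j\le\lambda_i\}$ (row index $i$ increasing downward). A set-valued tableau of shape $\lambda$ with entries in $[n]=\{1,\dots,n\}$ assigns a non-empty subset $T_{i,j}\subseteq[n]$ to each box $(i,j)\in\lambda$ such that $\max T_{i,j}\le\min T_{i,j+1}$ whenever $(i,j),(i,j+1)\in\lambda$ and $\max T_{i,j}<\min T_{i+1,j}$ whenever $(i,j),(i+1,j)\in\lambda$; $\mathrm{SVT}(\lambda,n)$ is the set of these. *)

theory Defs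
  imports Main
begin

text \<open>A partition is a weakly decreasing finite list of positive integers
  (its nonzero parts); row i (1-based) has length lam ! (i-1).\<close>
definition is_partition :: "nat list \<Rightarrow> bool" where
  "is_partition lam \<longleftrightarrow> sorted (rev lam) \<and> (\<forall>x\<in>set lam. 0 < x)"

definition young_diagram :: "nat list \<Rightarrow> (nat \<times> nat) set" where
  "young_diagram lam = {(i, j). 1 \<le> i \<and> i \<le> length lam \<and> 1 \<le> j \<and> j \<le> lam ! (i - 1)}"

definition SVT :: "nat list \<Rightarrow> nat \<Rightarrow> (nat \<times> nat \<Rightarrow> nat set) set" where
  "SVT lam n = {T.
     (\<forall>b. b \<notin> young_diagram lam \<longrightarrow> T b = {}) \<and>
     (\<forall>b\<in>young_diagram lam. T b \<noteq> {} \<and> T b \<subseteq> {1..n}) \<and>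
     (\<forall>i j. (i, j) \<in> young_diagram lam \<and> (i, j + 1) \<in> young_diagram lam
          \<longrightarrow> Max (T (i, j)) \<le> Min (T (i, j + 1))) \<and>
     (\<forall>i j. (i, j) \<in> young_diagram lam \<and> (i + 1, j) \<in> young_diagram lam
          \<longrightarrow> Max (T (i, j)) < Min (T (i + 1, j)))}"

end

theory Submission
  imports Defs
begin

definition SVTf :: "(nat \<times> nat) set \<Rightarrow> (nat \<times> nat \<Rightarrow> nat) \<Rightarrow> (nat \<times> nat \<Rightarrow> nat set) set" where
"SVTf D f = {T. (\<forall>b. b \<notin> D \<longrightarrow> T b = {}) \<and> (\<forall>b\<in>D. T b \<noteq> {} \<and> T b \<subseteq> {1..f b}) \<and>
   (\<forall>i j. (i,j)\<in>D \<and> (i,j+1)\<in>D \<longrightarrow> Max (T(i,j)) \<le> Min (T(i,j+1))) \<and>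
   (\<forall>i j. (i,j)\<in>D \<and> (i+1,j)\<in>D \<longrightarrow> Max (T(i,j)) < Min (T(i+1,j)))}"

lemma SVT_eq: "SVT lam n = SVTf (young_diagram lam) (\<lambda>_. n)"
  by (simp add: SVT_def SVTf_def)

lemma finite_SVTf: assumes "finite D" shows "finite (SVTf D f)"
proof -
  let ?M = "Max (f ` D)"
  have "SVTf D f \<subseteq> {T. \<forall>x. (x \<in> D \<longrightarrow> T x \<in> Pow {1..?M}) \<and> (x \<notin> D \<longrightarrow> T x = {})}"
  proof (auto simp: SVTf_def)
    fix T a b x assume "\<forall>b\<in>D. T b \<noteq> {} \<and> T b \<subseteq> {Suc 0..f b}" "(a,b)\<in>D" "x \<in> T (a,b)"
    moreover have "f (a,b) \<le> ?M" using assms \<open>(a,b)\<in>D\<close> by simp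
    ultimately show "Suc 0 \<le> x" "x \<le> ?M" by force+
  qed
  moreover have "finite {T. \<forall>x. (x \<in> D \<longrightarrow> T x \<in> Pow {1..?M}) \<and> (x \<notin> D \<longrightarrow> T x = {})}"
    by (rule finite_set_of_finite_funs) (use assms in auto)
  ultimately show ?thesis by (rule finite_subset)
qed

lemma SVTf_out: "T \<in> SVTf D f \<Longrightarrow> b \<notin> D \<Longrightarrow> T b = {}"
  unfolding SVTf_def mem_Collect_eq by blast

lemma parity_sum: "finite A \<Longrightarrow> odd (\<Sum>x\<in>A. g x::nat) \<longleftrightarrow> odd (card {x\<in>A. odd (g x)})"
proof (induction A rule: finite_induct)
  case empty then show ?case by simp
next
  case (insert x F)
  have "{y\<in>insert x F. odd (g y)} = (if odd (g x) then insert x {y\<in>F. odd (g y)} else {y\<in>F. odd (g y)})"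
    by auto
  then show ?case using insert by auto
qed

lemma odd_pow_minus: "odd (2^k - 1::nat) \<longleftrightarrow> 0 < k"
proof (cases k)
  case 0 then show ?thesis by simp
next
  case (Suc m)
  have "(1::nat) \<le> 2^m" by simp
  then show ?thesis using Suc by simp
qed

lemma card_ne_subsets: "odd (card {S. S \<noteq> {} \<and> S \<subseteq> {lo..m::nat}}) \<longleftrightarrow> lo \<le> m"
proof -
  have "{S. S \<noteq> {} \<and> S \<subseteq> {lo..m::nat}} = Pow {lo..m} - {{}}" by auto
  then have "card {S. S \<noteq> {} \<and> S \<subseteq> {lo..m::nat}} = 2 ^ (Suc m - lo) - 1"
    by (simp add: card_Pow)
  then show ?thesis by (simp add: odd_pow_minus less_Suc_eq_le)
qed


lemma main_odd:
  assumes "finite D" "\<forall>b\<in>D. 1 \<le> fst b \<and> fst b \<le> f b"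
  shows "odd (card (SVTf D f))"
  using assms
proof (induction "card D" arbitrary: D f rule: less_induct)
  case less
  show ?case
  proof (cases "D = {}")
    case True
    then have "SVTf D f = {\<lambda>_. {}}" by (auto simp: SVTf_def)
    then show ?thesis by simp
  next
    case False
    let ?g = "\<lambda>b::nat\<times>nat. fst b + snd b"
    have "Max (?g ` D) \<in> ?g ` D" using False less.prems(1) by simp
    then obtain c where c: "c \<in> D" and cm: "?g c = Max (?g ` D)" by auto
    have cmax: "\<forall>b\<in>D. ?g b \<le> ?g c" using cm less.prems(1) by simp
    obtain ci cj where cij: "c = (ci, cj)" by (cases c)
    have noright: "(ci, cj+1) \<notin> D" using cmax cij by fastforce
    have nobelow: "(ci+1, cj) \<notin> D" using cmax cij by fastforce
    define D' where "D' = D - {c}"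
    have fD': "finite D'" using less.prems(1) D'_def by simp
    have cD': "card D' < card D" using c less.prems(1) unfolding D'_def by (meson card_Diff1_less)
    define A where "A T' = {S. S \<noteq> {} \<and> S \<subseteq> {1..f c} \<and>
       (\<forall>i j. (i,j)\<in>D' \<and> (i,j+1) = c \<longrightarrow> Max (T'(i,j)) \<le> Min S) \<and>
       (\<forall>i j. (i,j)\<in>D' \<and> (i+1,j) = c \<longrightarrow> Max (T'(i,j)) < Min S)}" for T'
    define F where "F = (\<lambda>(T'::nat\<times>nat \<Rightarrow> nat set, S::nat set). T'(c:=S))"
    have img: "SVTf D f = F ` (SIGMA T':SVTf D' f. A T')"
    proof
      show "SVTf D f \<subseteq> F ` (SIGMA T':SVTf D' f. A T')"
      proof
        fix T assume T: "T \<in> SVTf D f"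
        have "T(c:={}) \<in> SVTf D' f" using T unfolding SVTf_def D'_def by auto
        moreover have "T c \<in> A (T(c:={}))" using T c unfolding SVTf_def A_def D'_def by auto
        moreover have "T = F (T(c:={}), T c)" by (simp add: F_def)
        ultimately show "T \<in> F ` (SIGMA T':SVTf D' f. A T')" by blast
      qed
    next
      show "F ` (SIGMA T':SVTf D' f. A T') \<subseteq> SVTf D f"
      proof clarify
        fix T' S assume T': "T' \<in> SVTf D' f" and S: "S \<in> A T'"
        show "F (T', S) \<in> SVTf D f"
          unfolding SVTf_def F_def prod.case
        proof (intro CollectI conjI allI impI ballI)
          fix b assume "b \<notin> D"
          then have "b \<noteq> c" "b \<notin> D'" using c D'_def by auto
          then show "(T'(c := S)) b = {}" using SVTf_out[OF T'] by simp
        next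
          fix b assume "b \<in> D" then show "(T'(c := S)) b \<noteq> {}" "(T'(c := S)) b \<subseteq> {1..f b}"
            using T' S unfolding SVTf_def D'_def A_def by auto
        next
          fix i j assume h: "(i, j) \<in> D \<and> (i, j + 1) \<in> D"
          show "Max ((T'(c := S)) (i, j)) \<le> Min ((T'(c := S)) (i, j + 1))"
          proof (cases "(i,j+1) = c")
            case True
            then have "(i,j) \<noteq> c" by auto
            then show ?thesis using True h S unfolding A_def D'_def by auto
          next
            case False
            moreover have "(i,j) \<noteq> c" using h noright cij by auto
            ultimately show ?thesis using h T' unfolding SVTf_def D'_def by auto
          qed
        next
          fix i j assume h: "(i, j) \<in> D \<and> (i + 1, j) \<in> D"
          show "Max ((T'(c := S)) (i, j)) < Min ((T'(c := S)) (i + 1, j))"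
          proof (cases "(i+1,j) = c")
            case True
            then have "(i,j) \<noteq> c" by auto
            then show ?thesis using True h S unfolding A_def D'_def by auto
          next
            case False
            moreover have "(i,j) \<noteq> c" using h nobelow cij by auto
            ultimately show ?thesis using h T' unfolding SVTf_def D'_def by auto
          qed
        qed
      qed
    qed
    have inj: "inj_on F (SIGMA T':SVTf D' f. A T')"
    proof (rule inj_onI, clarify)
      fix T1 S1 T2 S2 assume "T1 \<in> SVTf D' f" "T2 \<in> SVTf D' f" "F (T1, S1) = F (T2, S2)"
      moreover have "c \<notin> D'" using D'_def by simp
      ultimately have "T1 c = {}" "T2 c = {}" "T1(c:=S1) = T2(c:=S2)" using SVTf_out unfolding F_def by auto
      then show "T1 = T2 \<and> S1 = S2" by (metis fun_upd_same fun_upd_triv fun_upd_upd)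
    qed
    have finA: "finite (A T')" for T'
      by (rule finite_subset[of _ "Pow {1..f c}"]) (auto simp: A_def)
    have card_eq: "card (SVTf D f) = (\<Sum>T'\<in>SVTf D' f. card (A T'))"
      using img inj finA fD' by (simp add: card_image finite_SVTf)
    define f' where "f' b = (if fst b = ci \<and> snd b + 1 = cj then min (f b) (f c)
        else if fst b + 1 = ci \<and> snd b = cj then min (f b) (f c - 1) else f b)" for b
    have fle: "{1..f' b} \<subseteq> {1..f b}" for b unfolding f'_def by auto
    have sub: "T' \<in> SVTf D' f' \<longleftrightarrow> T' \<in> SVTf D' f \<and> (\<forall>b\<in>D'. T' b \<subseteq> {1..f' b})" for T'
      unfolding SVTf_def mem_Collect_eq using fle by blast
    have fc1: "1 \<le> f c" using less.prems(2) c by force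
    have step: "odd (card (A T')) \<longleftrightarrow> (\<forall>b\<in>D'. T' b \<subseteq> {1..f' b})" if T': "T' \<in> SVTf D' f" for T'
    proof -
      have ne: "T' b \<noteq> {}" "T' b \<subseteq> {1..f b}" "finite (T' b)" if "b \<in> D'" for b
      proof -
        have "T' b \<noteq> {} \<and> T' b \<subseteq> {1..f b}" using T' that unfolding SVTf_def mem_Collect_eq by blast
        then show "T' b \<noteq> {}" "T' b \<subseteq> {1..f b}" "finite (T' b)" by (auto intro: finite_subset)
      qed
      define L where "L = {Max (T'(i,j)) | i j. (i,j)\<in>D' \<and> (i,j+1) = c}"
      define U where "U = {Max (T'(i,j)) + 1 | i j. (i,j)\<in>D' \<and> (i+1,j) = c}"
      define lo where "lo = Max (insert 1 (L \<union> U))"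
      have "L \<subseteq> {Max (T'(ci, cj - 1))}" unfolding L_def using cij by auto
      then have finL: "finite L" by (rule finite_subset) simp
      have "U \<subseteq> {Max (T'(ci - 1, cj)) + 1}" unfolding U_def using cij by auto
      then have finU: "finite U" by (rule finite_subset) simp
      have lo_le: "lo \<le> x \<longleftrightarrow> 1 \<le> x \<and> (\<forall>y\<in>L. y \<le> x) \<and> (\<forall>y\<in>U. y \<le> x)" for x
        unfolding lo_def using finL finU by (simp add: Max_le_iff) blast
      have AS: "A T' = {S. S \<noteq> {} \<and> S \<subseteq> {lo..f c}}"
      proof (rule set_eqI)
        fix S
        show "S \<in> A T' \<longleftrightarrow> S \<in> {S. S \<noteq> {} \<and> S \<subseteq> {lo..f c}}"
        proof (cases "S \<noteq> {} \<and> S \<subseteq> {..f c}")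
          case True
          then have fS: "finite S" "S \<noteq> {}" by (auto intro: finite_subset)
          have m1: "S \<subseteq> {lo..f c} \<longleftrightarrow> lo \<le> Min S" using True fS by (auto simp: Min_ge_iff)
          have m2: "S \<subseteq> {1..f c} \<longleftrightarrow> 1 \<le> Min S" using True fS by (auto simp: Min_ge_iff)
          have m3: "(\<forall>i j. (i,j)\<in>D' \<and> (i,j+1) = c \<longrightarrow> Max (T'(i,j)) \<le> Min S) \<longleftrightarrow> (\<forall>y\<in>L. y \<le> Min S)"
            unfolding L_def by blast
          have m4: "(\<forall>i j. (i,j)\<in>D' \<and> (i+1,j) = c \<longrightarrow> Max (T'(i,j)) < Min S) \<longleftrightarrow> (\<forall>y\<in>U. y \<le> Min S)"
            unfolding U_def by auto
          show ?thesis unfolding A_def mem_Collect_eq using True m1 m2 m3 m4 lo_le by blast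
        next
          case False
          then show ?thesis unfolding A_def by auto
        qed
      qed
      have "odd (card (A T')) \<longleftrightarrow> lo \<le> f c" unfolding AS by (rule card_ne_subsets)
      also have "\<dots> \<longleftrightarrow> (\<forall>y\<in>L. y \<le> f c) \<and> (\<forall>y\<in>U. y \<le> f c)" using lo_le fc1 by simp
      also have "\<dots> \<longleftrightarrow> (\<forall>b\<in>D'. T' b \<subseteq> {1..f' b})"
      proof
        assume h: "(\<forall>y\<in>L. y \<le> f c) \<and> (\<forall>y\<in>U. y \<le> f c)"
        show "\<forall>b\<in>D'. T' b \<subseteq> {1..f' b}"
        proof
          fix b assume b: "b \<in> D'"
          obtain i j where bij: "b = (i,j)" by (cases b)
          show "T' b \<subseteq> {1..f' b}"
          proof (cases "i = ci \<and> j + 1 = cj")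
            case True
            then have "Max (T' b) \<in> L" unfolding L_def using b bij cij by auto
            then have "Max (T' b) \<le> f c" using h by blast
            then show ?thesis using ne[OF b] True bij unfolding f'_def by (auto simp: Max_le_iff)
          next
            case F1: False
            show ?thesis
            proof (cases "i + 1 = ci \<and> j = cj")
              case True
              then have "Max (T' b) + 1 \<in> U" unfolding U_def using b bij cij by auto
              then have "Max (T' b) + 1 \<le> f c" using h by blast
              show ?thesis
              proof
                fix x assume x: "x \<in> T' b"
                then have "x \<le> Max (T' b)" using ne[OF b] by simp
                moreover have "x \<in> {1..f b}" using x ne[OF b] by blast
                ultimately show "x \<in> {1..f' b}" using \<open>Max (T' b) + 1 \<le> f c\<close> True F1 bij unfolding f'_def by auto
              qed
            next
              case False
              then show ?thesis using ne[OF b] F1 bij unfolding f'_def by auto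
            qed
          qed
        qed
      next
        assume h: "\<forall>b\<in>D'. T' b \<subseteq> {1..f' b}"
        have hL: "y \<le> f c" if "y \<in> L" for y
        proof -
          from that obtain i j where ij: "(i,j)\<in>D'" "(i,j+1) = c" "y = Max (T'(i,j))" unfolding L_def by auto
          then have "f' (i,j) \<le> f c" unfolding f'_def using cij by auto
          moreover have "Max (T'(i,j)) \<in> T'(i,j)" using ne[OF ij(1)] by simp
          ultimately show ?thesis using h ij by force
        qed
        have hU: "y \<le> f c" if "y \<in> U" for y
        proof -
          from that obtain i j where ij: "(i,j)\<in>D'" "(i+1,j) = c" "y = Max (T'(i,j)) + 1" unfolding U_def by auto
          then have "f' (i,j) \<le> f c - 1" unfolding f'_def using cij by auto
          moreover have "Max (T'(i,j)) \<in> T'(i,j)" using ne[OF ij(1)] by simp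
          ultimately show ?thesis using h ij fc1 by force
        qed
        show "(\<forall>y\<in>L. y \<le> f c) \<and> (\<forall>y\<in>U. y \<le> f c)" using hL hU by blast
      qed
      finally show ?thesis .
    qed
    have key: "{T'\<in>SVTf D' f. odd (card (A T'))} = SVTf D' f'"
      using sub step by blast
    have "odd (card (SVTf D' f'))"
    proof (rule less.hyps[OF cD' fD'])
      show "\<forall>b\<in>D'. 1 \<le> fst b \<and> fst b \<le> f' b"
      proof
        fix b assume b: "b \<in> D'"
        then have h: "1 \<le> fst b" "fst b \<le> f b" using less.prems(2) D'_def by auto
        have hc: "ci \<le> f c" using less.prems(2) c cij by force
        show "1 \<le> fst b \<and> fst b \<le> f' b" using h hc unfolding f'_def by auto
      qed
    qed
    then show ?thesis using card_eq key parity_sum[OF finite_SVTf[OF fD']] by simp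
  qed
qed

theorem corollaryA2:
  fixes n :: nat and lam :: "nat list"
  assumes "0 < n" and "is_partition lam" and "length lam \<le> n"
  shows "odd (card (SVT lam n))"
proof -
  have fin: "finite (young_diagram lam)"
  proof (rule finite_subset[of _ "{1..length lam} \<times> {1..Max (insert 0 (set lam))}"])
    show "young_diagram lam \<subseteq> {1..length lam} \<times> {1..Max (insert 0 (set lam))}"
    proof (rule subsetI)
      fix p assume p: "p \<in> young_diagram lam"
      obtain a b where pab: "p = (a, b)" by (cases p)
      from p pab have ab: "(a, b) \<in> young_diagram lam" by simp
      then have h: "1 \<le> a" "a \<le> length lam" "1 \<le> b" "b \<le> lam ! (a - 1)"
        by (auto simp: young_diagram_def)
      then have "lam ! (a - 1) \<in> insert 0 (set lam)" by simp
      then have "lam ! (a - 1) \<le> Max (insert 0 (set lam))" by (intro Max_ge) auto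
      then have "b \<le> Max (insert 0 (set lam))" using h(4) by linarith
      then show "p \<in> {1..length lam} \<times> {1..Max (insert 0 (set lam))}" using h pab by auto
    qed
  qed simp
  have "\<forall>b\<in>young_diagram lam. 1 \<le> fst b \<and> fst b \<le> n"
    using assms(3) by (auto simp: young_diagram_def)
  then show ?thesis unfolding SVT_eq by (intro main_odd[OF fin]) auto
qed

end
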